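(* Let $\alpha\in(1,\infty)$, let $p_X$ be a distribution on a finite set $\mathcal X$ and $p_{Y\mid X}$ a channel to a finite set $\mathcal Y$. Let $\tilde q^{(0)}_{Y\mid X}$ be an initial channel and for $k\ge0$ define $$r^{(k)}_{X\mid Y}(x\mid y)=\frac{p_X(x)\tilde q^{(k)}_{Y\mid X}(y\mid x)}{\sum_{x'}p_X(x')\tilde q^{(k)}_{Y\mid X}(y\mid x')},\qquad \tilde q^{(k+1)}_{Y\mid X}(y\mid x)=\frac{p_{Y\mid X}(y\mid x)r^{(k)}_{X\mid Y}(x\mid y)^{1-1/\alpha}}{\sum_{y'}p_{Y\mid X}(y'\mid x)r^{(k)}_{X\mid Y}(x\mid y')^{1-1/\alpha}}.$$ Then $\lim_{k\to\infty}\tilde F_\alpha^{\mathrm C}(\tilde q^{(k+1)}_{Y\mid X},r^{(k)}_{X\mid Y})=I_\alpha^{\mathrm C}(X;Y)$.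
   Context: $\log$ is natural, $D$ is the Kullback–Leibler divergence, and $D_\alpha(p\|q):=\frac{1}{\alpha-1}\log\sum_zp(z)^\alpha q(z)^{1-\alpha}$. The Augustin–Csiszár mutual information is $I_\alpha^{\mathrm C}(X;Y):=\min_{q_Y}\sum_xp_X(x)D_\alpha(p_{Y\mid X}(\cdot\mid x)\|q_Y)$. For a channel $\tilde q_{Y\mid X}$ and a reverse channel $r_{X\mid Y}$, $\tilde F_\alpha^{\mathrm C}(\tilde q_{Y\mid X},r_{X\mid Y}):=\frac{\alpha}{1-\alpha}D(p_X\tilde q_{Y\mid X}\|p_Xp_{Y\mid X})+\mathbb E^{p_X\tilde q_{Y\mid X}}[\log\frac{r_{X\mid Y}(X\mid Y)}{p_X(X)}]$. *)

theory Defs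
  imports "HOL-Analysis.Analysis" "HOL-Library.Extended_Real"
begin

definition is_dist :: "('a::finite \<Rightarrow> real) \<Rightarrow> bool" where
  "is_dist p \<longleftrightarrow> (\<forall>z. p z \<ge> 0) \<and> (\<Sum>z\<in>UNIV. p z) = 1"

(* a channel W, with W x y = p_{Y|X}(y|x) *)
definition is_channel :: "('x::finite \<Rightarrow> 'y::finite \<Rightarrow> real) \<Rightarrow> bool" where
  "is_channel W \<longleftrightarrow> (\<forall>x. is_dist (W x))"

definition renyi_div :: "real \<Rightarrow> ('a::finite \<Rightarrow> real) \<Rightarrow> ('a \<Rightarrow> real) \<Rightarrow> ereal" where
  "renyi_div \<alpha> p q =
     (if \<exists>z. p z > 0 \<and> q z = 0 then \<infinity>
      else ereal (1 / (\<alpha> - 1) * ln (\<Sum>z\<in>UNIV. p z powr \<alpha> * q z powr (1 - \<alpha>))))"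

definition kl_div :: "('a::finite \<Rightarrow> real) \<Rightarrow> ('a \<Rightarrow> real) \<Rightarrow> ereal" where
  "kl_div p q =
     (if \<exists>z. p z > 0 \<and> q z = 0 then \<infinity>
      else ereal (\<Sum>z\<in>UNIV. if p z = 0 then 0 else p z * ln (p z / q z)))"

definition augustin_csiszar_MI :: "real \<Rightarrow> ('x::finite \<Rightarrow> real) \<Rightarrow> ('x \<Rightarrow> 'y::finite \<Rightarrow> real) \<Rightarrow> ereal" where
  "augustin_csiszar_MI \<alpha> pX W =
     (INF qY\<in>{qY. is_dist qY}. (\<Sum>x\<in>UNIV. ereal (pX x) * renyi_div \<alpha> (W x) qY))"

definition exp_log_ratio :: "('x::finite \<Rightarrow> real) \<Rightarrow> ('x \<Rightarrow> 'y::finite \<Rightarrow> real) \<Rightarrow> ('x \<Rightarrow> 'y \<Rightarrow> real) \<Rightarrow> ereal" where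
  "exp_log_ratio pX q r =
     (if \<exists>x y. pX x * q x y > 0 \<and> r x y = 0 then -\<infinity>
      else ereal (\<Sum>x\<in>UNIV. \<Sum>y\<in>UNIV.
              if pX x * q x y = 0 then 0 else pX x * q x y * ln (r x y / pX x)))"

(* F~_alpha^C(q~, r), where r x y = r_{X|Y}(x|y) and q x y = q~_{Y|X}(y|x) *)
definition F_C :: "real \<Rightarrow> ('x::finite \<Rightarrow> real) \<Rightarrow> ('x \<Rightarrow> 'y::finite \<Rightarrow> real)
                    \<Rightarrow> ('x \<Rightarrow> 'y \<Rightarrow> real) \<Rightarrow> ('x \<Rightarrow> 'y \<Rightarrow> real) \<Rightarrow> ereal" where
  "F_C \<alpha> pX W q r =
     ereal (\<alpha> / (1 - \<alpha>)) * kl_div (\<lambda>(x,y). pX x * q x y) (\<lambda>(x,y). pX x * W x y)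
     + exp_log_ratio pX q r"

definition rev_channel :: "('x::finite \<Rightarrow> real) \<Rightarrow> ('x \<Rightarrow> 'y::finite \<Rightarrow> real) \<Rightarrow> ('x \<Rightarrow> 'y \<Rightarrow> real)" where
  "rev_channel pX q = (\<lambda>x y. pX x * q x y / (\<Sum>x'\<in>UNIV. pX x' * q x' y))"

definition channel_update :: "real \<Rightarrow> ('x::finite \<Rightarrow> 'y::finite \<Rightarrow> real) \<Rightarrow> ('x \<Rightarrow> 'y \<Rightarrow> real) \<Rightarrow> ('x \<Rightarrow> 'y \<Rightarrow> real)" where
  "channel_update \<alpha> W r = (\<lambda>x y. W x y * r x y powr (1 - 1/\<alpha>)
        / (\<Sum>y'\<in>UNIV. W x y' * r x y' powr (1 - 1/\<alpha>)))"

end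

theory Submission imports Defs begin

lemma holder_sum:
  fixes a b :: "'a::finite \<Rightarrow> real"
  assumes t: "0 < \<theta>" "\<theta> < 1" and an: "\<And>i. 0 \<le> a i" and bn: "\<And>i. 0 \<le> b i"
  shows "(\<Sum>i\<in>UNIV. a i powr \<theta> * b i powr (1-\<theta>)) \<le> (\<Sum>i\<in>UNIV. a i) powr \<theta> * (\<Sum>i\<in>UNIV. b i) powr (1-\<theta>)"
proof -
  define A where "A = (\<Sum>i\<in>UNIV. a i)"
  define B where "B = (\<Sum>i\<in>UNIV. b i)"
  have A0: "0 \<le> A" unfolding A_def by (auto intro!: sum_nonneg an)
  have B0: "0 \<le> B" unfolding B_def by (auto intro!: sum_nonneg bn)
  show ?thesis
  proof (cases "A = 0 \<or> B = 0")
    case True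
    then have "(\<forall>i. a i = 0) \<or> (\<forall>i. b i = 0)" unfolding A_def B_def
      using sum_nonneg_eq_0_iff[of UNIV a] sum_nonneg_eq_0_iff[of UNIV b] an bn by auto
    then have "(\<Sum>i\<in>UNIV. a i powr \<theta> * b i powr (1-\<theta>)) = 0" by auto
    then show ?thesis by simp
  next
    case False
    then have Ap: "0 < A" and Bp: "0 < B" using A0 B0 by auto
    have tmi: "a i powr \<theta> * b i powr (1-\<theta>) \<le> A powr \<theta> * B powr (1-\<theta>) * (\<theta> * (a i / A) + (1-\<theta>) * (b i / B))" for i
    proof (cases "a i = 0 \<or> b i = 0")
      case True
      then show ?thesis using Ap Bp t an[of i] bn[of i] by (auto intro!: mult_nonneg_nonneg add_nonneg_nonneg)
    next
      case False
      then have ap: "0 < a i" and bp: "0 < b i" using an[of i] bn[of i] by auto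
      have "(a i / A) powr \<theta> * (b i / B) powr (1-\<theta>) \<le> \<theta> * (a i / A) + (1-\<theta>) * (b i / B)"
        by (rule Youngs_inequality_0) (use t ap bp Ap Bp in auto)
      then have "A powr \<theta> * B powr (1-\<theta>) * ((a i / A) powr \<theta> * (b i / B) powr (1-\<theta>)) \<le> A powr \<theta> * B powr (1-\<theta>) * (\<theta> * (a i / A) + (1-\<theta>) * (b i / B))"
        by (intro mult_left_mono) auto
      moreover have "A powr \<theta> * B powr (1-\<theta>) * ((a i / A) powr \<theta> * (b i / B) powr (1-\<theta>)) = a i powr \<theta> * b i powr (1-\<theta>)"
        using Ap Bp ap bp by (simp add: powr_divide)
      ultimately show ?thesis by simp
    qed
    have "(\<Sum>i\<in>UNIV. a i powr \<theta> * b i powr (1-\<theta>)) \<le> (\<Sum>i\<in>UNIV. A powr \<theta> * B powr (1-\<theta>) * (\<theta> * (a i / A) + (1-\<theta>) * (b i / B)))"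
      by (rule sum_mono) (rule tmi)
    also have "\<dots> = A powr \<theta> * B powr (1-\<theta>) * (\<theta> * (\<Sum>i\<in>UNIV. a i) / A + (1-\<theta>) * (\<Sum>i\<in>UNIV. b i) / B)"
      by (simp add: sum_distrib_left sum.distrib sum_divide_distrib flip: sum_distrib_left[of "A powr \<theta> * B powr (1-\<theta>)"])
    also have "\<dots> = A powr \<theta> * B powr (1-\<theta>)" using Ap Bp unfolding A_def[symmetric] B_def[symmetric] by simp
    finally show ?thesis unfolding A_def B_def .
  qed
qed

lemma gibbs:
  fixes a b :: "'a::finite \<Rightarrow> real"
  assumes an: "\<And>i. 0 \<le> a i" and sa: "sum a UNIV = 1" and bn: "\<And>i. 0 \<le> b i" and sb: "sum b UNIV \<le> 1"
    and ab: "\<And>i. 0 < a i \<Longrightarrow> 0 < b i"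
  shows "(\<Sum>i\<in>UNIV. a i * (ln (a i) - ln (b i))) \<ge> 0"
proof -
  have "a i * (ln (b i) - ln (a i)) \<le> b i - a i" for i
  proof (cases "a i = 0")
    case True then show ?thesis using bn[of i] by simp
  next
    case False then have ap: "0 < a i" using an[of i] by simp
    have bp: "0 < b i" using ab[OF ap] .
    have "ln (b i / a i) \<le> b i / a i - 1" using ap bp by (intro ln_le_minus_one) simp
    then have "a i * ln (b i / a i) \<le> a i * (b i / a i - 1)" using ap by (intro mult_left_mono) auto
    then show ?thesis using ap bp by (simp add: ln_div right_diff_distrib)
  qed
  then have "(\<Sum>i\<in>UNIV. a i * (ln (b i) - ln (a i))) \<le> (\<Sum>i\<in>UNIV. b i - a i)" by (rule sum_mono)
  also have "\<dots> \<le> 0" using sa sb by (simp add: sum_subtractf)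
  finally have "(\<Sum>i\<in>UNIV. a i * (ln (b i) - ln (a i))) \<le> 0" .
  moreover have "(\<Sum>i\<in>UNIV. a i * (ln (b i) - ln (a i))) = - (\<Sum>i\<in>UNIV. a i * (ln (a i) - ln (b i)))"
    by (simp add: sum_negf[symmetric] algebra_simps)
  ultimately show ?thesis by simp
qed

locale AC =
  fixes \<alpha> :: real and P :: "'x::finite \<Rightarrow> real" and W :: "'x \<Rightarrow> 'y::finite \<Rightarrow> real"
  assumes a1: "\<alpha> > 1" and dP: "is_dist P" and chW: "is_channel W"
begin

abbreviation "\<beta> \<equiv> 1 - 1/\<alpha>"
definition "c = \<alpha> / (\<alpha> - 1)"
definition "Qm q y = (\<Sum>x\<in>UNIV. P x * q x y)"
abbreviation "rv q \<equiv> rev_channel P q"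
abbreviation "Tm q \<equiv> channel_update \<alpha> W (rv q)"
definition "Zf q x = (\<Sum>y\<in>UNIV. W x y * rv q x y powr \<beta>)"
definition "f q = (\<Sum>x\<in>UNIV. P x * (c * ln (Zf q x) - ln (P x)))"
definition "Inv q \<longleftrightarrow> (\<forall>x y. 0 \<le> q x y) \<and> (\<forall>x. 0 < P x \<longrightarrow> sum (q x) UNIV = 1)
   \<and> (\<forall>x y. 0 < P x \<longrightarrow> 0 < W x y \<longrightarrow> 0 < q x y)"

lemma P_nn: "0 \<le> P x" using dP by (auto simp: is_dist_def)
lemma P_sum: "sum P UNIV = 1" using dP by (auto simp: is_dist_def)
lemma W_nn: "0 \<le> W x y" using chW by (auto simp: is_channel_def is_dist_def)
lemma W_sum: "sum (W x) UNIV = 1" using chW by (auto simp: is_channel_def is_dist_def)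
lemma beta_pos: "0 < \<beta>" "\<beta> < 1" using a1 by auto
lemma c_beta: "c * \<beta> = 1" using a1 by (simp add: c_def field_simps)
lemma W_ex: "\<exists>y. 0 < W x y"
proof (rule ccontr)
  assume h: "\<not> ?thesis" have "W x y = 0" for y by (metis h less_eq_real_def W_nn)
  then show False using W_sum[of x] by simp
qed

lemma rv_def': "rv q x y = P x * q x y / Qm q y"
  by (simp add: rev_channel_def Qm_def)

lemma Qm_nn: "Inv q \<Longrightarrow> 0 \<le> Qm q y"
  unfolding Qm_def Inv_def by (auto intro!: sum_nonneg simp: P_nn)

lemma Qm_ge: "Inv q \<Longrightarrow> P x * q x y \<le> Qm q y"
  unfolding Qm_def Inv_def
  by (rule member_le_sum[where f="\<lambda>x. P x * q x y"]) (auto simp: P_nn)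

lemma rv_nn: "Inv q \<Longrightarrow> 0 \<le> rv q x y"
  unfolding rv_def' using Qm_nn[of q y] P_nn[of x] by (auto simp: Inv_def)

lemma rv_pos: "Inv q \<Longrightarrow> 0 < P x \<Longrightarrow> 0 < W x y \<Longrightarrow> 0 < rv q x y"
proof -
  assume i: "Inv q" and p: "0 < P x" and w: "0 < W x y"
  have "0 < q x y" using i p w by (auto simp: Inv_def)
  then have "0 < P x * q x y" using p by simp
  moreover then have "0 < Qm q y" using Qm_ge[OF i, of x y] by linarith
  ultimately show ?thesis unfolding rv_def' by simp
qed

lemma rv_zero: "P x = 0 \<Longrightarrow> rv q x y = 0"
  unfolding rv_def' by simp

lemma Zf_pos: "Inv q \<Longrightarrow> 0 < P x \<Longrightarrow> 0 < Zf q x"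
proof -
  assume i: "Inv q" and p: "0 < P x"
  obtain y where w: "0 < W x y" using W_ex by blast
  have "0 < W x y * rv q x y powr \<beta>" using rv_pos[OF i p w] w by simp
  moreover have "W x y * rv q x y powr \<beta> \<le> Zf q x" unfolding Zf_def
    by (rule member_le_sum[where f="\<lambda>y. W x y * rv q x y powr \<beta>"]) (auto simp: W_nn)
  ultimately show ?thesis by linarith
qed

lemma Tm_val: "Tm q x y = W x y * rv q x y powr \<beta> / Zf q x"
  by (simp add: channel_update_def Zf_def)

lemma Tm_zero: "P x = 0 \<Longrightarrow> Tm q x y = 0"
  by (simp add: Tm_val rv_zero)

lemma Tm_Inv: "Inv q \<Longrightarrow> Inv (Tm q)"
proof -
  assume i: "Inv q"
  have "0 \<le> Tm q x y" for x y
  proof (cases "P x = 0")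
    case True then show ?thesis by (simp add: Tm_zero)
  next
    case False then have "0 < P x" using P_nn[of x] by simp
    then show ?thesis unfolding Tm_val by (intro divide_nonneg_pos mult_nonneg_nonneg) (auto simp: W_nn Zf_pos[OF i])
  qed
  moreover have "sum (Tm q x) UNIV = 1" if "0 < P x" for x
    unfolding Tm_val using Zf_pos[OF i that] by (simp add: Zf_def flip: sum_divide_distrib)
  moreover have "0 < Tm q x y" if "0 < P x" "0 < W x y" for x y
    unfolding Tm_val using Zf_pos[OF i that(1)] rv_pos[OF i that] that by simp
  ultimately show ?thesis unfolding Inv_def by blast
qed

lemma Tm_pos_W: "0 < Tm q x y \<Longrightarrow> 0 < W x y"
  unfolding Tm_val using W_nn[of x y] by (cases "W x y = 0") auto

lemma sum_UNIV_pair: "(\<Sum>z\<in>(UNIV::('x\<times>'y) set). g z) = (\<Sum>x\<in>UNIV. \<Sum>y\<in>UNIV. g (x,y))"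
  by (simp add: sum.cartesian_product flip: UNIV_Times_UNIV)

lemma alg: assumes "k*b = (1::real)" shows "-k*(T*(b*a - z)) + T*(a-p) = T*(k*z - p)"
proof -
  have "-k*(T*(b*a - z)) = -(k*b)*T*a + k*T*z" by (simp add: algebra_simps)
  then show ?thesis using assms by (simp add: algebra_simps)
qed

lemma alg2: assumes "k*b = (1::real)" shows "u*(a - bb) = b*(u*(k*a - p) - u*(k*bb - p))"
proof -
  have "b*(u*(k*a - p) - u*(k*bb - p)) = (k*b)*u*(a - bb)" by (simp add: algebra_simps)
  then show ?thesis using assms by simp
qed

lemma term_eq:
  assumes i: "Inv q"
  shows "\<alpha>/(1-\<alpha>) * (if P x * Tm q x y = 0 then 0 else P x * Tm q x y * ln (P x * Tm q x y / (P x * W x y)))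
     + (if P x * Tm q x y = 0 then 0 else P x * Tm q x y * ln (rv q x y / P x))
     = P x * Tm q x y * (c * ln (Zf q x) - ln (P x))"
proof (cases "P x * Tm q x y = 0")
  case True then show ?thesis by simp
next
  case False
  have px: "0 < P x" using False P_nn[of x] by (simp add: less_eq_real_def)
  have tp: "0 < Tm q x y" using False Tm_Inv[OF i] P_nn[of x] by (auto simp: Inv_def less_eq_real_def)
  have w: "0 < W x y" using Tm_pos_W[OF tp] .
  have r: "0 < rv q x y" using rv_pos[OF i px w] .
  have z: "0 < Zf q x" using Zf_pos[OF i px] .
  have "ln (P x * Tm q x y / (P x * W x y)) = ln (Tm q x y / W x y)" using px by simp
  also have "Tm q x y / W x y = rv q x y powr \<beta> / Zf q x" unfolding Tm_val using w by simp
  also have "ln (rv q x y powr \<beta> / Zf q x) = \<beta> * ln (rv q x y) - ln (Zf q x)"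
    using r z by (simp add: ln_div)
  finally have e1: "ln (P x * Tm q x y / (P x * W x y)) = \<beta> * ln (rv q x y) - ln (Zf q x)" .
  have e2: "ln (rv q x y / P x) = ln (rv q x y) - ln (P x)" using r px by (simp add: ln_div)
  have ac: "\<alpha>/(1-\<alpha>) = - c" using a1 by (simp add: c_def field_simps)
  show ?thesis using False alg[OF c_beta, of "P x * Tm q x y" "ln (rv q x y)" "ln (Zf q x)" "ln (P x)"]
    unfolding e1 e2 ac by simp
qed

lemma F_C_eq:
  assumes i: "Inv q"
  shows "F_C \<alpha> P W (Tm q) (rv q) = ereal (f q)"
proof -
  have n1: "\<not> (\<exists>z. (\<lambda>(x,y). P x * Tm q x y) z > 0 \<and> (\<lambda>(x,y). P x * W x y) z = 0)"
  proof (rule notI, elim exE conjE)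
    fix z assume h0: "(\<lambda>(x,y). P x * Tm q x y) z > 0" "(\<lambda>(x,y). P x * W x y) z = 0"
    obtain x y where zz: "z = (x,y)" by (cases z)
    have h: "P x * Tm q x y > 0" "P x * W x y = 0" using h0 zz by auto
    have px: "0 < P x" using h(1) P_nn[of x] Tm_Inv[OF i] unfolding Inv_def
      by (metis less_eq_real_def mult_zero_left)
    have "0 < Tm q x y" using h(1) px by (simp add: zero_less_mult_iff)
    then have "0 < W x y" by (rule Tm_pos_W)
    then show False using h(2) px by simp
  qed
  have n2: "\<not> (\<exists>x y. P x * Tm q x y > 0 \<and> rv q x y = 0)"
  proof (rule notI, elim exE conjE)
    fix x y assume h: "P x * Tm q x y > 0" "rv q x y = 0"
    have px: "0 < P x" using h(1) P_nn[of x] Tm_Inv[OF i] unfolding Inv_def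
      by (metis less_eq_real_def mult_zero_left)
    have "0 < Tm q x y" using h(1) px by (simp add: zero_less_mult_iff)
    then have "0 < W x y" by (rule Tm_pos_W)
    then have "0 < rv q x y" using rv_pos[OF i px] by blast
    then show False using h(2) by linarith
  qed
  have "F_C \<alpha> P W (Tm q) (rv q) = ereal (\<alpha>/(1-\<alpha>) * (\<Sum>x\<in>UNIV. \<Sum>y\<in>UNIV. (if P x * Tm q x y = 0 then 0 else P x * Tm q x y * ln (P x * Tm q x y / (P x * W x y))))
      + (\<Sum>x\<in>UNIV. \<Sum>y\<in>UNIV. (if P x * Tm q x y = 0 then 0 else P x * Tm q x y * ln (rv q x y / P x))))"
    unfolding F_C_def kl_div_def exp_log_ratio_def using n1 n2
    by (simp only: if_False sum_UNIV_pair case_prod_conv) simp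
  also have "\<alpha>/(1-\<alpha>) * (\<Sum>x\<in>UNIV. \<Sum>y\<in>UNIV. (if P x * Tm q x y = 0 then 0 else P x * Tm q x y * ln (P x * Tm q x y / (P x * W x y))))
      + (\<Sum>x\<in>UNIV. \<Sum>y\<in>UNIV. (if P x * Tm q x y = 0 then 0 else P x * Tm q x y * ln (rv q x y / P x)))
      = (\<Sum>x\<in>UNIV. \<Sum>y\<in>UNIV. P x * Tm q x y * (c * ln (Zf q x) - ln (P x)))"
    by (simp only: sum_distrib_left sum.distrib[symmetric]) (intro sum.cong refl term_eq[OF i])
  also have "\<dots> = f q" unfolding f_def
  proof (rule sum.cong[OF refl])
    fix x
    show "(\<Sum>y\<in>UNIV. P x * Tm q x y * (c * ln (Zf q x) - ln (P x))) = P x * (c * ln (Zf q x) - ln (P x))"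
    proof (cases "P x = 0")
      case True then show ?thesis by simp
    next
      case False then have "0 < P x" using P_nn[of x] by simp
      then have "sum (Tm q x) UNIV = 1" using Tm_Inv[OF i] by (simp add: Inv_def)
      then show ?thesis by (simp add: mult.commute mult.left_commute flip: sum_distrib_left sum_distrib_right)
    qed
  qed
  finally show ?thesis .
qed

lemma Qm_sum_rv: "Inv q \<Longrightarrow> (\<Sum>x\<in>UNIV. rv q x y) \<le> 1"
  unfolding rv_def' by (cases "Qm q y = 0") (auto simp: Qm_def simp flip: sum_divide_distrib)

definition "Nd Q x = (\<Sum>y\<in>UNIV. W x y powr \<alpha> * Q y powr (1 - \<alpha>))"

lemma upper_x:
  assumes i: "Inv q" and Q: "is_dist Q" and px: "0 < P x" and supp: "\<And>y. 0 < W x y \<Longrightarrow> 0 < Q y"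
  shows "c * ln (Zf q x) \<le> 1/(\<alpha>-1) * ln (Nd Q x) + ln (\<Sum>y\<in>UNIV. Q y * rv q x y)"
proof -
  have Qnn: "0 \<le> Q y" for y using Q by (auto simp: is_dist_def)
  have te: "W x y * rv q x y powr \<beta> = (W x y powr \<alpha> * Q y powr (1 - \<alpha>)) powr (1/\<alpha>) * (Q y * rv q x y) powr \<beta>" for y
  proof (cases "W x y = 0")
    case True then show ?thesis by simp
  next
    case False
    then have w: "0 < W x y" using W_nn[of x y] by simp
    have qy: "0 < Q y" using supp[OF w] .
    have "(W x y powr \<alpha> * Q y powr (1 - \<alpha>)) powr (1/\<alpha>) * (Q y * rv q x y) powr \<beta>
        = W x y powr (\<alpha> * (1/\<alpha>)) * Q y powr ((1-\<alpha>)*(1/\<alpha>) + \<beta>) * rv q x y powr \<beta>"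
      by (simp add: powr_mult powr_powr powr_add)
    also have "\<alpha> * (1/\<alpha>) = 1" using a1 by simp
    also have "(1-\<alpha>)*(1/\<alpha>) + \<beta> = 0" using a1 by (simp add: field_simps)
    finally show ?thesis using w qy by simp
  qed
  have "Zf q x = (\<Sum>y\<in>UNIV. (W x y powr \<alpha> * Q y powr (1 - \<alpha>)) powr (1/\<alpha>) * (Q y * rv q x y) powr (1 - 1/\<alpha>))"
    unfolding Zf_def using te by simp
  also have "\<dots> \<le> (\<Sum>y\<in>UNIV. W x y powr \<alpha> * Q y powr (1 - \<alpha>)) powr (1/\<alpha>) * (\<Sum>y\<in>UNIV. Q y * rv q x y) powr (1 - 1/\<alpha>)"
    by (rule holder_sum) (use a1 in \<open>auto simp: Qnn rv_nn[OF i]\<close>)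
  finally have h: "Zf q x \<le> Nd Q x powr (1/\<alpha>) * (\<Sum>y\<in>UNIV. Q y * rv q x y) powr \<beta>" unfolding Nd_def .
  have z: "0 < Zf q x" using Zf_pos[OF i px] .
  have N: "0 < Nd Q x"
  proof -
    have "0 \<le> Nd Q x" unfolding Nd_def by (auto intro!: sum_nonneg)
    moreover have "Nd Q x \<noteq> 0" using h z by auto
    ultimately show ?thesis by simp
  qed
  have B: "0 < (\<Sum>y\<in>UNIV. Q y * rv q x y)"
  proof -
    have "0 \<le> (\<Sum>y\<in>UNIV. Q y * rv q x y)" by (auto intro!: sum_nonneg simp: Qnn rv_nn[OF i])
    moreover have "(\<Sum>y\<in>UNIV. Q y * rv q x y) \<noteq> 0" using h z by auto
    ultimately show ?thesis by simp
  qed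
  have "ln (Zf q x) \<le> ln (Nd Q x powr (1/\<alpha>) * (\<Sum>y\<in>UNIV. Q y * rv q x y) powr \<beta>)"
    using h z by simp
  also have "\<dots> = 1/\<alpha> * ln (Nd Q x) + \<beta> * ln (\<Sum>y\<in>UNIV. Q y * rv q x y)"
    using N B by (simp add: ln_mult)
  finally have "c * ln (Zf q x) \<le> c * (1/\<alpha> * ln (Nd Q x) + \<beta> * ln (\<Sum>y\<in>UNIV. Q y * rv q x y))"
    using a1 by (intro mult_left_mono) (auto simp: c_def)
  also have "\<dots> = 1/(\<alpha>-1) * ln (Nd Q x) + ln (\<Sum>y\<in>UNIV. Q y * rv q x y)"
    using a1 by (simp add: c_def field_simps)
  finally show ?thesis .
qed

lemma B_pos:
  assumes i: "Inv q" and Q: "is_dist Q" and px: "0 < P x" and supp: "\<And>y. 0 < W x y \<Longrightarrow> 0 < Q y"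
  shows "0 < (\<Sum>y\<in>UNIV. Q y * rv q x y)"
proof -
  have Qnn: "0 \<le> Q y" for y using Q by (auto simp: is_dist_def)
  obtain y where w: "0 < W x y" using W_ex by blast
  have "0 < Q y * rv q x y" using supp[OF w] rv_pos[OF i px w] by simp
  also have "\<dots> \<le> (\<Sum>y\<in>UNIV. Q y * rv q x y)"
    by (rule member_le_sum[where f="\<lambda>y. Q y * rv q x y"]) (auto simp: Qnn rv_nn[OF i])
  finally show ?thesis .
qed

lemma upper_real:
  assumes i: "Inv q" and Q: "is_dist Q" and supp: "\<And>x y. 0 < P x \<Longrightarrow> 0 < W x y \<Longrightarrow> 0 < Q y"
  shows "f q \<le> (\<Sum>x\<in>UNIV. P x * (1/(\<alpha>-1) * ln (Nd Q x)))"
proof -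
  have Qnn: "0 \<le> Q y" for y using Q by (auto simp: is_dist_def)
  define B where "B x = (\<Sum>y\<in>UNIV. Q y * rv q x y)" for x
  have Bnn: "0 \<le> B x" for x unfolding B_def by (auto intro!: sum_nonneg simp: Qnn rv_nn[OF i])
  have px_ineq: "P x * (c * ln (Zf q x) - ln (P x)) \<le> P x * (1/(\<alpha>-1) * ln (Nd Q x)) + (B x - P x)" for x
  proof (cases "P x = 0")
    case True then show ?thesis using Bnn[of x] by simp
  next
    case False
    then have px: "0 < P x" using P_nn[of x] by simp
    have Bp: "0 < B x" unfolding B_def by (rule B_pos[OF i Q px supp[OF px]])
    have u: "c * ln (Zf q x) \<le> 1/(\<alpha>-1) * ln (Nd Q x) + ln (B x)"
      unfolding B_def by (rule upper_x[OF i Q px supp[OF px]])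
    have "ln (B x / P x) \<le> B x / P x - 1" using Bp px by (intro ln_le_minus_one) simp
    then have "P x * ln (B x / P x) \<le> P x * (B x / P x - 1)" using px by (intro mult_left_mono) auto
    then have l: "P x * (ln (B x) - ln (P x)) \<le> B x - P x" using px Bp by (simp add: ln_div right_diff_distrib)
    have "P x * (c * ln (Zf q x)) \<le> P x * (1/(\<alpha>-1) * ln (Nd Q x) + ln (B x))"
      using u px by (intro mult_left_mono) auto
    then show ?thesis using l by (simp add: algebra_simps)
  qed
  have "f q \<le> (\<Sum>x\<in>UNIV. P x * (1/(\<alpha>-1) * ln (Nd Q x)) + (B x - P x))"
    unfolding f_def by (rule sum_mono) (rule px_ineq)
  also have "\<dots> = (\<Sum>x\<in>UNIV. P x * (1/(\<alpha>-1) * ln (Nd Q x))) + ((\<Sum>x\<in>UNIV. B x) - 1)"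
    by (simp add: sum.distrib sum_subtractf P_sum)
  also have "(\<Sum>x\<in>UNIV. B x) \<le> 1"
  proof -
    have "(\<Sum>x\<in>UNIV. B x) = (\<Sum>y\<in>UNIV. Q y * (\<Sum>x\<in>UNIV. rv q x y))"
      unfolding B_def sum_distrib_left by (rule sum.swap)
    also have "\<dots> \<le> (\<Sum>y\<in>UNIV. Q y * 1)"
      by (intro sum_mono mult_left_mono Qm_sum_rv[OF i] Qnn)
    also have "\<dots> = 1" using Q by (simp add: is_dist_def)
    finally show ?thesis .
  qed
  finally show ?thesis by simp
qed

lemma ereal_mult_sum: "(\<Sum>x\<in>A. ereal (g x)) = ereal (\<Sum>x\<in>A. g x)"
  by (simp add: sum_ereal)

lemma renyi_fin: assumes h: "\<And>y. 0 < W x y \<Longrightarrow> 0 < Q y" shows "renyi_div \<alpha> (W x) Q = ereal (1/(\<alpha>-1) * ln (Nd Q x))"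
proof -
  have "\<not>(\<exists>z. W x z > 0 \<and> Q z = 0)" using h by (metis less_irrefl)
  then show ?thesis unfolding renyi_div_def Nd_def by simp
qed

lemma upper_ereal:
  assumes i: "Inv q" and Q: "is_dist Q"
  shows "ereal (f q) \<le> (\<Sum>x\<in>UNIV. ereal (P x) * renyi_div \<alpha> (W x) Q)"
proof (cases "\<exists>x y. 0 < P x \<and> 0 < W x y \<and> Q y = 0")
  case True
  then obtain x y where h: "0 < P x" "0 < W x y" "Q y = 0" by blast
  then have "renyi_div \<alpha> (W x) Q = \<infinity>" unfolding renyi_div_def by auto
  then have "ereal (P x) * renyi_div \<alpha> (W x) Q = \<infinity>" using h by simp
  then have "(\<Sum>x\<in>UNIV. ereal (P x) * renyi_div \<alpha> (W x) Q) = \<infinity>" by (auto simp: sum_Pinfty)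
  then show ?thesis by simp
next
  case False
  have Qnn: "0 \<le> Q y" for y using Q by (auto simp: is_dist_def)
  have supp: "0 < Q y" if "0 < P x" "0 < W x y" for x y
  proof (rule ccontr)
    assume "\<not> 0 < Q y" then have "Q y = 0" using Qnn[of y] by simp
    then show False using False that by blast
  qed
  have "ereal (P x) * renyi_div \<alpha> (W x) Q = ereal (P x * (1/(\<alpha>-1) * ln (Nd Q x)))" for x
  proof (cases "P x = 0")
    case True then show ?thesis by (simp add: zero_ereal_def[symmetric])
  next
    case False then have "0 < P x" using P_nn[of x] by simp
    then show ?thesis using renyi_fin[of x Q] supp by simp
  qed
  then have "(\<Sum>x\<in>UNIV. ereal (P x) * renyi_div \<alpha> (W x) Q) = ereal (\<Sum>x\<in>UNIV. P x * (1/(\<alpha>-1) * ln (Nd Q x)))"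
    by (simp add: sum_ereal)
  then show ?thesis using upper_real[OF i Q supp] by simp
qed

definition "Phi qs q = (\<Sum>x\<in>UNIV. \<Sum>y\<in>UNIV. P x * qs x y * ln (q x y))"

lemma Qm_sum: "Inv q \<Longrightarrow> sum (Qm q) UNIV = 1"
proof -
  assume i: "Inv q"
  have "sum (Qm q) UNIV = (\<Sum>x\<in>UNIV. P x * sum (q x) UNIV)"
    unfolding Qm_def sum_distrib_left by (rule sum.swap)
  also have "\<dots> = (\<Sum>x\<in>UNIV. P x)"
  proof (rule sum.cong[OF refl])
    fix x show "P x * sum (q x) UNIV = P x"
      using i P_nn[of x] by (cases "P x = 0") (auto simp: Inv_def)
  qed
  finally show ?thesis using P_sum by simp
qed

lemma fp_supp: "Inv q \<Longrightarrow> Tm qs = qs \<Longrightarrow> 0 < P x \<Longrightarrow> 0 < qs x y \<Longrightarrow> 0 < q x y"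
  by (metis Inv_def Tm_pos_W)

lemma gibbs_x:
  assumes i: "Inv q" and iS: "Inv qs" and fp: "Tm qs = qs" and px: "0 < P x"
  shows "(\<Sum>y\<in>UNIV. qs x y * (ln (qs x y) - ln (q x y))) \<ge> 0"
  by (rule gibbs) (use i iS px fp_supp[OF i fp px] in \<open>auto simp: Inv_def\<close>)

lemma Phi_le:
  assumes i: "Inv q" and iS: "Inv qs" and fp: "Tm qs = qs"
  shows "Phi qs q \<le> Phi qs qs"
proof -
  have "Phi qs qs - Phi qs q = (\<Sum>x\<in>UNIV. P x * (\<Sum>y\<in>UNIV. qs x y * (ln (qs x y) - ln (q x y))))"
    unfolding Phi_def by (simp add: sum_subtractf sum_distrib_left algebra_simps flip: sum.distrib)
  also have "\<dots> \<ge> 0"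
  proof (rule sum_nonneg)
    fix x show "0 \<le> P x * (\<Sum>y\<in>UNIV. qs x y * (ln (qs x y) - ln (q x y)))"
      using gibbs_x[OF i iS fp, of x] P_nn[of x] by (cases "P x = 0") auto
  qed
  finally show ?thesis by simp
qed

lemma log_step:
  assumes i: "Inv q" and iS: "Inv qs" and fp: "Tm qs = qs" and px: "0 < P x" and qp: "0 < qs x y"
  shows "ln (Tm q x y) - ln (q x y) = (1-\<beta>) * (ln (qs x y) - ln (q x y)) + \<beta> * (ln (Qm qs y) - ln (Qm q y))
      + (ln (Zf qs x) - ln (Zf q x))"
proof -
  have w: "0 < W x y" using qp fp Tm_pos_W by metis
  have q: "0 < q x y" using fp_supp[OF i fp px qp] .
  have Qq: "0 < Qm q y" using Qm_ge[OF i, of x y] px q by (smt (verit) mult_pos_pos)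
  have Qs: "0 < Qm qs y" using Qm_ge[OF iS, of x y] px qp by (smt (verit) mult_pos_pos)
  have lr: "ln (rv g x y) = ln (P x) + ln (g x y) - ln (Qm g y)" if "0 < g x y" "0 < Qm g y" for g
    unfolding rv_def' using that px by (simp add: ln_div ln_mult)
  have lt: "ln (Tm g x y) = ln (W x y) + \<beta> * ln (rv g x y) - ln (Zf g x)" if "Inv g" for g
  proof -
    have "0 < rv g x y" using rv_pos[OF that px w] .
    then show ?thesis unfolding Tm_val using w Zf_pos[OF that px] by (simp add: ln_div ln_mult)
  qed
  have e1: "ln (Tm q x y) = ln (W x y) + \<beta> * (ln (P x) + ln (q x y) - ln (Qm q y)) - ln (Zf q x)"
    using lt[OF i] lr[OF q Qq] by simp
  have e2: "ln (qs x y) = ln (W x y) + \<beta> * (ln (P x) + ln (qs x y) - ln (Qm qs y)) - ln (Zf qs x)"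
    using lt[OF iS] lr[OF qp Qs] fp by simp
  show ?thesis using e1 e2 by (simp add: algebra_simps)
qed

lemma tele:
  assumes i: "Inv q" and iS: "Inv qs" and fp: "Tm qs = qs"
  shows "Phi qs (Tm q) - Phi qs q \<ge> \<beta> * (f qs - f q)"
proof -
  define D1 where "D1 = (\<Sum>x\<in>UNIV. P x * (\<Sum>y\<in>UNIV. qs x y * (ln (qs x y) - ln (q x y))))"
  define D2 where "D2 = (\<Sum>y\<in>UNIV. Qm qs y * (ln (Qm qs y) - ln (Qm q y)))"
  have "Phi qs (Tm q) - Phi qs q = (\<Sum>x\<in>UNIV. \<Sum>y\<in>UNIV. P x * qs x y * (ln (Tm q x y) - ln (q x y)))"
    unfolding Phi_def by (simp add: sum_subtractf algebra_simps)
  also have "\<dots> = (\<Sum>x\<in>UNIV. \<Sum>y\<in>UNIV. P x * qs x y * ((1-\<beta>) * (ln (qs x y) - ln (q x y)) + \<beta> * (ln (Qm qs y) - ln (Qm q y))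
      + (ln (Zf qs x) - ln (Zf q x))))"
  proof (intro sum.cong refl)
    fix x y
    show "P x * qs x y * (ln (Tm q x y) - ln (q x y)) = P x * qs x y * ((1-\<beta>) * (ln (qs x y) - ln (q x y)) + \<beta> * (ln (Qm qs y) - ln (Qm q y))
      + (ln (Zf qs x) - ln (Zf q x)))"
    proof (cases "P x = 0 \<or> qs x y = 0")
      case True then show ?thesis by auto
    next
      case False
      then have "0 < P x" "0 < qs x y" using P_nn[of x] iS by (auto simp: Inv_def less_eq_real_def)
      then show ?thesis using log_step[OF i iS fp] by simp
    qed
  qed
  also have "\<dots> = (1-\<beta>) * (\<Sum>x\<in>UNIV. \<Sum>y\<in>UNIV. P x * (qs x y * (ln (qs x y) - ln (q x y))))
      + \<beta> * (\<Sum>x\<in>UNIV. \<Sum>y\<in>UNIV. P x * qs x y * (ln (Qm qs y) - ln (Qm q y)))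
      + (\<Sum>x\<in>UNIV. \<Sum>y\<in>UNIV. P x * qs x y * (ln (Zf qs x) - ln (Zf q x)))"
    by (simp only: sum_distrib_left sum.distrib[symmetric]) (intro sum.cong refl, simp add: algebra_simps)
  also have "(\<Sum>x\<in>UNIV. \<Sum>y\<in>UNIV. P x * (qs x y * (ln (qs x y) - ln (q x y)))) = D1"
    unfolding D1_def by (simp only: sum_distrib_left)
  also have "(\<Sum>x\<in>UNIV. \<Sum>y\<in>UNIV. P x * qs x y * (ln (Zf qs x) - ln (Zf q x)))
     = (\<Sum>x\<in>UNIV. P x * sum (qs x) UNIV * (ln (Zf qs x) - ln (Zf q x)))"
    by (simp only: sum_distrib_left sum_distrib_right)
  also have "(\<Sum>x\<in>UNIV. \<Sum>y\<in>UNIV. P x * qs x y * (ln (Qm qs y) - ln (Qm q y))) = D2"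
    unfolding D2_def Qm_def sum_distrib_right by (rule sum.swap)
  also have "(\<Sum>x\<in>UNIV. P x * sum (qs x) UNIV * (ln (Zf qs x) - ln (Zf q x))) = \<beta> * (f qs - f q)"
  proof -
    have "(\<Sum>x\<in>UNIV. P x * sum (qs x) UNIV * (ln (Zf qs x) - ln (Zf q x))) = (\<Sum>x\<in>UNIV. P x * (ln (Zf qs x) - ln (Zf q x)))"
    proof (rule sum.cong[OF refl])
      fix x show "P x * sum (qs x) UNIV * (ln (Zf qs x) - ln (Zf q x)) = P x * (ln (Zf qs x) - ln (Zf q x))"
        using iS P_nn[of x] by (cases "P x = 0") (auto simp: Inv_def)
    qed
    also have "\<dots> = \<beta> * (f qs - f q)" unfolding f_def sum_subtractf[symmetric] sum_distrib_left
      by (intro sum.cong refl alg2[OF c_beta])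
    finally show ?thesis .
  qed
  finally have eq: "Phi qs (Tm q) - Phi qs q = (1-\<beta>) * D1 + \<beta> * D2 + \<beta> * (f qs - f q)" .
  have "D1 \<ge> 0" unfolding D1_def
  proof (rule sum_nonneg)
    fix x show "0 \<le> P x * (\<Sum>y\<in>UNIV. qs x y * (ln (qs x y) - ln (q x y)))"
      using gibbs_x[OF i iS fp, of x] P_nn[of x] by (cases "P x = 0") auto
  qed
  moreover have "D2 \<ge> 0" unfolding D2_def
  proof (rule gibbs)
    show "0 \<le> Qm qs y" for y using Qm_nn[OF iS] .
    show "0 \<le> Qm q y" for y using Qm_nn[OF i] .
    show "sum (Qm qs) UNIV = 1" using Qm_sum[OF iS] .
    show "sum (Qm q) UNIV \<le> 1" using Qm_sum[OF i] by simp
    fix y assume "0 < Qm qs y"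
    then have "(\<Sum>x\<in>UNIV. P x * qs x y) \<noteq> 0" unfolding Qm_def by simp
    then obtain x where "P x * qs x y \<noteq> 0" by (meson sum.not_neutral_contains_not_neutral)
    then have px: "0 < P x" and qp: "0 < qs x y" using P_nn[of x] iS
      by (auto simp: Inv_def less_eq_real_def)
    have "0 < P x * q x y" using px fp_supp[OF i fp px qp] by simp
    then show "0 < Qm q y" using Qm_ge[OF i, of x y] by linarith
  qed
  ultimately show ?thesis unfolding eq using beta_pos by (simp add: add_nonneg_nonneg)
qed

lemma fp_pow:
  assumes iS: "Inv qs" and fp: "Tm qs = qs" and px: "0 < P x"
  shows "W x y powr \<alpha> * Qm qs y powr (1 - \<alpha>) = qs x y * Zf qs x powr \<alpha> / P x powr (\<alpha> - 1)"
proof (cases "W x y = 0")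
  case True
  then have "qs x y = 0" using fp Tm_pos_W[of qs x y] iS by (metis Inv_def less_eq_real_def less_irrefl)
  then show ?thesis using True by simp
next
  case False
  then have w: "0 < W x y" using W_nn[of x y] by simp
  have qp: "0 < qs x y" using iS px w by (auto simp: Inv_def)
  have Qs: "0 < Qm qs y" using Qm_ge[OF iS, of x y] px qp by (smt (verit) mult_pos_pos)
  have Z: "0 < Zf qs x" using Zf_pos[OF iS px] .
  have "qs x y = W x y * rv qs x y powr \<beta> / Zf qs x" using fp Tm_val by metis
  then have e: "qs x y * Zf qs x = W x y * (P x * qs x y / Qm qs y) powr \<beta>" using Z unfolding rv_def' by (simp add: eq_divide_eq)
  have "(qs x y * Zf qs x) powr \<alpha> = (W x y * (P x * qs x y / Qm qs y) powr \<beta>) powr \<alpha>" using e by simp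
  moreover have "((P x * qs x y / Qm qs y) powr \<beta>) powr \<alpha> = (P x * qs x y / Qm qs y) powr (\<alpha> - 1)"
  proof -
    have ba: "(1 - 1/\<alpha>) * \<alpha> = \<alpha> - 1" using a1 by (simp add: field_simps)
    show ?thesis by (simp only: powr_powr ba)
  qed
  ultimately have A: "qs x y powr \<alpha> * Zf qs x powr \<alpha> = W x y powr \<alpha> * (P x powr (\<alpha>-1) * qs x y powr (\<alpha>-1) / Qm qs y powr (\<alpha>-1))"
    by (simp only: powr_mult[of "qs x y"] powr_mult[of "W x y"] powr_divide[of "P x * qs x y"] powr_mult[of "P x"])
  have B: "qs x y powr \<alpha> = qs x y powr (\<alpha>-1) * qs x y"
    using qp powr_add[of "qs x y" "\<alpha>-1" 1] by simp
  have C: "Qm qs y powr (1 - \<alpha>) = 1 / Qm qs y powr (\<alpha>-1)" using Qs by (simp add: powr_minus_divide[symmetric])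
  define a where "a = qs x y powr (\<alpha>-1)"
  define p where "p = P x powr (\<alpha>-1)"
  define m where "m = Qm qs y powr (\<alpha>-1)"
  have ap: "0 < a" "0 < p" "0 < m" using qp px Qs unfolding a_def p_def m_def by auto
  have "a * (qs x y * Zf qs x powr \<alpha>) = a * (W x y powr \<alpha> * p / m)"
    using A unfolding B a_def[symmetric] p_def[symmetric] m_def[symmetric] by (simp add: algebra_simps)
  then have D: "qs x y * Zf qs x powr \<alpha> = W x y powr \<alpha> * p / m" using ap(1)
    by (metis mult_left_cancel less_irrefl)
  show ?thesis unfolding C m_def[symmetric] p_def[symmetric] D using ap by simp
qed

lemma fp_value:
  assumes iS: "Inv qs" and fp: "Tm qs = qs"
  shows "is_dist (Qm qs)" and "(\<Sum>x\<in>UNIV. ereal (P x) * renyi_div \<alpha> (W x) (Qm qs)) = ereal (f qs)"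
proof -
  show "is_dist (Qm qs)" unfolding is_dist_def using Qm_nn[OF iS] Qm_sum[OF iS] by simp
  have t: "ereal (P x) * renyi_div \<alpha> (W x) (Qm qs) = ereal (P x * (c * ln (Zf qs x) - ln (P x)))" for x
  proof (cases "P x = 0")
    case True then show ?thesis by (simp add: zero_ereal_def[symmetric])
  next
    case False then have px: "0 < P x" using P_nn[of x] by simp
    have supp: "0 < Qm qs y" if "0 < W x y" for y
    proof -
      have "0 < qs x y" using iS px that by (auto simp: Inv_def)
      then show ?thesis using Qm_ge[OF iS, of x y] px by (smt (verit) mult_pos_pos)
    qed
    have Z: "0 < Zf qs x" using Zf_pos[OF iS px] .
    have "Nd (Qm qs) x = (\<Sum>y\<in>UNIV. qs x y * Zf qs x powr \<alpha> / P x powr (\<alpha> - 1))"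
      unfolding Nd_def using fp_pow[OF iS fp px] by simp
    also have "\<dots> = Zf qs x powr \<alpha> / P x powr (\<alpha> - 1)"
      using iS px by (simp add: Inv_def flip: sum_divide_distrib sum_distrib_right)
    finally have "1/(\<alpha>-1) * ln (Nd (Qm qs) x) = 1/(\<alpha>-1) * (\<alpha> * ln (Zf qs x) - (\<alpha>-1) * ln (P x))"
      using Z px by (simp add: ln_div)
    also have "\<dots> = c * ln (Zf qs x) - ln (P x)" using a1 by (simp add: c_def field_simps)
    finally show ?thesis using renyi_fin[of x "Qm qs", OF supp] by simp
  qed
  show "(\<Sum>x\<in>UNIV. ereal (P x) * renyi_div \<alpha> (W x) (Qm qs)) = ereal (f qs)"
    unfolding t f_def by (simp add: sum_ereal)
qed

definition "lo d x y = (if 0 < P x \<and> 0 < W x y then d else 0)"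
definition "hi x y = (if 0 < P x \<and> 0 < W x y then 1 else (0::real))"
definition "Dm d = {q. (\<forall>x y. lo d x y \<le> q x y \<and> q x y \<le> hi x y) \<and> (\<forall>x. sum (q x) UNIV = (if 0 < P x then 1 else 0))}"

lemma Dm_D: assumes "q \<in> Dm d"
  shows "lo d x y \<le> q x y" "q x y \<le> hi x y" "sum (q x) UNIV = (if 0 < P x then 1 else 0)"
  using assms unfolding Dm_def by blast+

lemma Dm_Inv: assumes d: "0 < d" and q: "q \<in> Dm d" shows "Inv q"
  unfolding Inv_def
proof (intro conjI allI impI)
  fix x y
  show "0 \<le> q x y" using Dm_D(1)[OF q, of x y] d unfolding lo_def by (auto split: if_splits)
  show "0 < P x \<Longrightarrow> sum (q x) UNIV = 1" using Dm_D(3)[OF q, of x] by simp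
  show "0 < P x \<Longrightarrow> 0 < W x y \<Longrightarrow> 0 < q x y" using Dm_D(1)[OF q, of x y] d unfolding lo_def by simp
qed

lemma Dm_le1: "q \<in> Dm d \<Longrightarrow> q x y \<le> 1"
  using Dm_D(2)[of q d x y] unfolding hi_def by (auto split: if_splits)

lemma K_ex: "\<exists>K>0. K \<le> 1 \<and> (\<forall>x y. 0 < P x \<longrightarrow> 0 < W x y \<longrightarrow> K \<le> W x y * P x powr \<beta>)"
proof -
  define A where "A = (\<lambda>(x,y). W x y * P x powr \<beta>) ` {(x,y). 0 < P x \<and> 0 < W x y}"
  define K where "K = Min (A \<union> {1})"
  have fin: "finite (A \<union> {1})" unfolding A_def by simp
  have pos: "\<forall>a\<in>A \<union> {1}. 0 < a" unfolding A_def by auto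
  have "0 < K" unfolding K_def using fin pos by (subst Min_gr_iff) auto
  moreover have "K \<le> 1" unfolding K_def using fin by (intro Min_le) auto
  moreover have "K \<le> W x y * P x powr \<beta>" if "0 < P x" "0 < W x y" for x y
    unfolding K_def using fin that by (intro Min_le) (auto simp: A_def)
  ultimately show ?thesis by blast
qed

definition "Kc = (SOME K. K>0 \<and> K \<le> 1 \<and> (\<forall>x y. 0 < P x \<longrightarrow> 0 < W x y \<longrightarrow> K \<le> W x y * P x powr \<beta>))"
definition "dl = min (1 / real CARD('y)) (Kc powr \<alpha>)"

lemma Kc: "0 < Kc" "Kc \<le> 1" "0 < P x \<Longrightarrow> 0 < W x y \<Longrightarrow> Kc \<le> W x y * P x powr \<beta>"
  using someI_ex[OF K_ex] unfolding Kc_def by blast+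

lemma dl_pos: "0 < dl" unfolding dl_def using Kc(1) by simp

lemma dl_le: "dl \<le> Kc * dl powr \<beta>"
proof -
  have "dl powr (1/\<alpha>) \<le> (Kc powr \<alpha>) powr (1/\<alpha>)"
    unfolding dl_def using a1 Kc(1) by (intro powr_mono2) auto
  also have "\<dots> = Kc" using a1 Kc(1) by (simp add: powr_powr)
  finally have h: "dl powr (1/\<alpha>) \<le> Kc" .
  have "dl = dl powr (1/\<alpha>) * dl powr \<beta>" using dl_pos by (simp add: powr_add[symmetric])
  also have "\<dots> \<le> Kc * dl powr \<beta>" using h by (intro mult_right_mono) auto
  finally show ?thesis .
qed

lemma Dm_Tm: assumes q: "q \<in> Dm dl" shows "Tm q \<in> Dm dl"
proof -
  have i: "Inv q" using Dm_Inv[OF dl_pos q] .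
  have ti: "Inv (Tm q)" using Tm_Inv[OF i] .
  have le1: "Tm q x y \<le> 1" if "0 < P x" for x y
  proof -
    have "Tm q x y \<le> sum (Tm q x) UNIV"
      by (rule member_le_sum[where f="Tm q x"]) (use ti in \<open>auto simp: Inv_def\<close>)
    then show ?thesis using ti that by (simp add: Inv_def)
  qed
  have lb: "dl \<le> Tm q x y" if px: "0 < P x" and w: "0 < W x y" for x y
  proof -
    have Qle: "Qm q y' \<le> 1" for y'
    proof -
      have "Qm q y' \<le> (\<Sum>x\<in>UNIV. P x * 1)" unfolding Qm_def
        by (intro sum_mono mult_left_mono Dm_le1[OF q] P_nn)
      then show ?thesis using P_sum by simp
    qed
    have rle: "rv q x y' \<le> 1" for y'
    proof (cases "Qm q y' = 0")
      case True then show ?thesis unfolding rv_def' by simp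
    next
      case False then have "0 < Qm q y'" using Qm_nn[OF i, of y'] by simp
      then show ?thesis unfolding rv_def' using Qm_ge[OF i, of x y'] by simp
    qed
    have Zle: "Zf q x \<le> 1"
    proof -
      have pl: "rv q x y' powr \<beta> \<le> 1" for y'
        using powr_le1[of "\<beta>" "rv q x y'"] rle[of y'] rv_nn[OF i, of x y'] beta_pos by simp
      have "Zf q x \<le> (\<Sum>y'\<in>UNIV. W x y' * 1)" unfolding Zf_def
        using pl by (intro sum_mono mult_left_mono) (auto simp: W_nn)
      then show ?thesis using W_sum by simp
    qed
    have qd: "dl \<le> q x y" using Dm_D(1)[OF q, of x y] px w unfolding lo_def by simp
    have "P x * dl \<le> rv q x y"
    proof -
      have Qp: "0 < Qm q y" using rv_pos[OF i px w] unfolding rv_def' using Qm_nn[OF i, of y]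
        by (cases "Qm q y = 0") auto
      have "P x * dl \<le> P x * q x y" using qd px by simp
      also have "\<dots> \<le> P x * q x y / Qm q y" using Qle[of y] Qp px i
        by (simp add: le_divide_eq Inv_def mult_le_cancel_left1 mult_left_le)
      finally show ?thesis unfolding rv_def' .
    qed
    then have rb: "(P x * dl) powr \<beta> \<le> rv q x y powr \<beta>"
      using px dl_pos beta_pos by (intro powr_mono2) auto
    have "dl \<le> Kc * dl powr \<beta>" by (rule dl_le)
    also have "\<dots> \<le> W x y * P x powr \<beta> * dl powr \<beta>" using Kc(3)[OF px w] by (intro mult_right_mono) auto
    also have "\<dots> = W x y * (P x * dl) powr \<beta>" using px dl_pos by (simp add: powr_mult)
    also have "\<dots> \<le> W x y * rv q x y powr \<beta>" using rb w by (intro mult_left_mono) auto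
    also have "\<dots> \<le> W x y * rv q x y powr \<beta> / Zf q x"
      using Zle Zf_pos[OF i px] w by (simp add: le_divide_eq mult_le_cancel_left1 mult_left_le)
    finally show ?thesis unfolding Tm_val .
  qed
  show ?thesis unfolding Dm_def lo_def hi_def
  proof (intro CollectI conjI allI)
    fix x y
    show "(if 0 < P x \<and> 0 < W x y then dl else 0) \<le> Tm q x y"
      using lb ti by (auto simp: Inv_def)
    show "Tm q x y \<le> (if 0 < P x \<and> 0 < W x y then 1 else 0)"
    proof (cases "0 < P x \<and> 0 < W x y")
      case True then show ?thesis using le1 by simp
    next
      case False
      then have "P x = 0 \<or> W x y = 0" using P_nn[of x] W_nn[of x y] by auto
      then have "Tm q x y = 0" using Tm_zero by (auto simp: Tm_val)
      then show ?thesis by simp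
    qed
  next
    fix x
    show "sum (Tm q x) UNIV = (if 0 < P x then 1 else 0)"
      using ti Tm_zero[of x] P_nn[of x] by (auto simp: Inv_def)
  qed
qed

lemma Dm_ne: "Dm dl \<noteq> {}"
proof -
  define q0 where "q0 x y = (if 0 < P x \<and> 0 < W x y then 1 / real (card {y. 0 < W x y}) else 0)" for x y
  have cp: "0 < card {y. 0 < W x y}" for x using W_ex[of x] by (simp add: card_gt_0_iff)
  have cl: "card {y. 0 < W x y} \<le> CARD('y)" for x by (rule card_mono) auto
  have "q0 \<in> Dm dl" unfolding Dm_def lo_def hi_def
  proof (intro CollectI conjI allI)
    fix x y
    show "(if 0 < P x \<and> 0 < W x y then dl else 0) \<le> q0 x y"
    proof (cases "0 < P x \<and> 0 < W x y")
      case True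
      have "dl \<le> 1 / real CARD('y)" unfolding dl_def by simp
      also have "\<dots> \<le> 1 / real (card {y. 0 < W x y})" using cp[of x] cl[of x]
        by (intro divide_left_mono) auto
      finally show ?thesis using True unfolding q0_def by simp
    next
      case False
      show ?thesis unfolding q0_def by (subst (1 2) if_not_P[OF False]) simp
    qed
    show "q0 x y \<le> (if 0 < P x \<and> 0 < W x y then 1 else 0)"
      unfolding q0_def using cp[of x] by auto
  next
    fix x
    show "sum (q0 x) UNIV = (if 0 < P x then 1 else 0)"
    proof (cases "0 < P x")
      case True
      have "sum (q0 x) UNIV = (\<Sum>y\<in>UNIV. if 0 < W x y then 1 / real (card {y. 0 < W x y}) else 0)"
        unfolding q0_def using True by simp
      also have "\<dots> = real (card {y. 0 < W x y}) * (1 / real (card {y. 0 < W x y}))"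
        by (simp add: sum.If_cases)
      also have "\<dots> = 1"
      proof -
        have "real (card {y. 0 < W x y}) > 0" using cp[of x] by (simp only: of_nat_0_less_iff)
        then show ?thesis by (metis divide_self_if less_irrefl times_divide_eq_right mult_1_right)
      qed
      finally show ?thesis using True by simp
    qed (simp add: q0_def)
  qed
  then show ?thesis by blast
qed

definition unemb :: "real^('x \<times> 'y) \<Rightarrow> 'x \<Rightarrow> 'y \<Rightarrow> real" where "unemb v = (\<lambda>x y. v $ (x,y))"
definition "Sv = {v. unemb v \<in> Dm dl}"
definition gmap :: "real^('x \<times> 'y) \<Rightarrow> real^('x \<times> 'y)" where "gmap v = (\<chi> z. Tm (unemb v) (fst z) (snd z))"

lemma unemb_gmap: "unemb (gmap v) = Tm (unemb v)"
  unfolding unemb_def gmap_def by simp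

lemma Sv_closed: "closed Sv"
  unfolding Sv_def Dm_def unemb_def mem_Collect_eq
  by (intro closed_Collect_conj closed_Collect_all closed_Collect_le closed_Collect_eq continuous_intros)

lemma Sv_bounded: "bounded Sv"
proof -
  have "norm v \<le> real CARD('x \<times> 'y)" if "v \<in> Sv" for v
  proof -
    have u: "unemb v \<in> Dm dl" using that by (simp add: Sv_def)
    have "\<bar>v $ z\<bar> \<le> 1" for z
    proof -
      obtain x y where z: "z = (x,y)" by (cases z)
      have "0 \<le> v $ z" using Dm_Inv[OF dl_pos u] unfolding Inv_def unemb_def z by simp
      moreover have "v $ z \<le> 1" using Dm_le1[OF u, of x y] unfolding unemb_def z by simp
      ultimately show ?thesis by simp
    qed
    then have "(\<Sum>z\<in>UNIV. \<bar>v $ z\<bar>) \<le> (\<Sum>z\<in>(UNIV::('x\<times>'y) set). 1)" by (intro sum_mono) auto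
    then show ?thesis using norm_le_l1_cart[of v] by simp
  qed
  then show ?thesis unfolding bounded_iff by blast
qed

lemma Sv_convex: "convex Sv"
  unfolding convex_def
proof (intro ballI allI impI)
  fix a b :: "real^('x\<times>'y)" and u v :: real
  assume a: "a \<in> Sv" and b: "b \<in> Sv" and u: "0 \<le> u" and v: "0 \<le> v" and uv: "u + v = 1"
  have ua: "unemb a \<in> Dm dl" and ub: "unemb b \<in> Dm dl" using a b by (auto simp: Sv_def)
  have e: "unemb (u *\<^sub>R a + v *\<^sub>R b) = (\<lambda>x y. u * unemb a x y + v * unemb b x y)"
    unfolding unemb_def by simp
  show "u *\<^sub>R a + v *\<^sub>R b \<in> Sv" unfolding Sv_def mem_Collect_eq e Dm_def
  proof (intro CollectI conjI allI)
    fix x y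
    have "lo dl x y = u * lo dl x y + v * lo dl x y" using uv by (simp add: algebra_simps flip: distrib_right)
    also have "\<dots> \<le> u * unemb a x y + v * unemb b x y"
      using Dm_D(1)[OF ua, of x y] Dm_D(1)[OF ub, of x y] u v by (intro add_mono mult_left_mono) auto
    finally show "lo dl x y \<le> u * unemb a x y + v * unemb b x y" .
    have "u * unemb a x y + v * unemb b x y \<le> u * hi x y + v * hi x y"
      using Dm_D(2)[OF ua, of x y] Dm_D(2)[OF ub, of x y] u v by (intro add_mono mult_left_mono) auto
    also have "\<dots> = hi x y" using uv by (simp flip: distrib_right)
    finally show "u * unemb a x y + v * unemb b x y \<le> hi x y" .
  next
    fix x
    have "(\<Sum>y\<in>UNIV. u * unemb a x y + v * unemb b x y) = u * sum (unemb a x) UNIV + v * sum (unemb b x) UNIV"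
      by (simp add: sum.distrib sum_distrib_left)
    also have "\<dots> = (if 0 < P x then 1 else 0)" using Dm_D(3)[OF ua, of x] Dm_D(3)[OF ub, of x] uv
      by (simp flip: distrib_right)
    finally show "(\<Sum>y\<in>UNIV. u * unemb a x y + v * unemb b x y) = (if 0 < P x then 1 else 0)" .
  qed
qed

lemma Sv_ne: "Sv \<noteq> {}"
proof -
  obtain q where q: "q \<in> Dm dl" using Dm_ne by blast
  have "unemb (\<chi> z. q (fst z) (snd z)) = q" unfolding unemb_def by simp
  then have "(\<chi> z. q (fst z) (snd z)) \<in> Sv" using q by (simp add: Sv_def)
  then show ?thesis by blast
qed

lemma Sv_maps: "gmap \<in> Sv \<rightarrow> Sv"
  using Dm_Tm unfolding Sv_def by (auto simp: unemb_gmap)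

lemma Sv_pos:
  assumes v: "v \<in> Sv" and px: "0 < P x" and w: "0 < W x y"
  shows "0 < v $ (x,y)" "0 < Qm (unemb v) y"
proof -
  have i: "Inv (unemb v)" using Dm_Inv[OF dl_pos] v by (simp add: Sv_def)
  show "0 < v $ (x,y)" using i px w unfolding Inv_def unemb_def by simp
  then have "0 < P x * unemb v x y" using px by (simp add: unemb_def)
  then show "0 < Qm (unemb v) y" using Qm_ge[OF i, of x y] by linarith
qed

lemma Sv_cont_comp: "continuous_on Sv (\<lambda>v. Tm (unemb v) x y)"
proof (cases "0 < P x \<and> 0 < W x y")
  case False
  then have "P x = 0 \<or> W x y = 0" using P_nn[of x] W_nn[of x y] by auto
  then have e: "(\<lambda>v. Tm (unemb v) x y) = (\<lambda>v. 0)" using Tm_zero by (auto simp: Tm_val)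
  show ?thesis unfolding e by (rule continuous_on_const)
next
  case True
  then have px: "0 < P x" and w: "0 < W x y" by auto
  define G where "G v y' = (if 0 < W x y' then (P x * v $ (x,y') / Qm (unemb v) y') powr \<beta> else 0)" for v y'
  have Gc: "continuous_on Sv (\<lambda>v. G v y')" for y'
  proof (cases "0 < W x y'")
    case False then show ?thesis unfolding G_def by simp
  next
    case True
    have "continuous_on Sv (\<lambda>v. (P x * v $ (x,y') / Qm (unemb v) y') powr \<beta>)"
      unfolding Qm_def unemb_def
      using Sv_pos[OF _ px True] px unfolding Qm_def unemb_def
      by (intro continuous_intros) (auto, (metis less_irrefl)+)
    then show ?thesis unfolding G_def using True by simp
  qed
  have den: "0 < (\<Sum>y'\<in>UNIV. W x y' * G v y')" if v: "v \<in> Sv" for v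
  proof -
    have "0 < W x y * G v y" unfolding G_def using w Sv_pos[OF v px w] px by simp
    also have "\<dots> \<le> (\<Sum>y'\<in>UNIV. W x y' * G v y')"
      by (rule member_le_sum[where f="\<lambda>y'. W x y' * G v y'"]) (auto simp: G_def W_nn)
    finally show ?thesis .
  qed
  have eq: "Tm (unemb v) x y = W x y * G v y / (\<Sum>y'\<in>UNIV. W x y' * G v y')" if "v \<in> Sv" for v
  proof -
    have "Zf (unemb v) x = (\<Sum>y'\<in>UNIV. W x y' * G v y')" unfolding Zf_def
    proof (rule sum.cong[OF refl])
      fix y' show "W x y' * rv (unemb v) x y' powr \<beta> = W x y' * G v y'"
        unfolding G_def rv_def' using W_nn[of x y'] by (cases "W x y' = 0") (auto simp: unemb_def)
    qed
    then show ?thesis unfolding Tm_val G_def rv_def' using w by (simp add: unemb_def)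
  qed
  have "continuous_on Sv (\<lambda>v. W x y * G v y / (\<Sum>y'\<in>UNIV. W x y' * G v y'))"
    using den by (intro continuous_intros Gc) (metis less_irrefl)
  moreover have "continuous_on Sv (\<lambda>v. Tm (unemb v) x y) = continuous_on Sv (\<lambda>v. W x y * G v y / (\<Sum>y'\<in>UNIV. W x y' * G v y'))"
    by (rule continuous_on_cong[OF refl]) (rule eq)
  ultimately show ?thesis by simp
qed

lemma Sv_cont: "continuous_on Sv gmap"
  unfolding gmap_def by (intro continuous_on_vec_lambda Sv_cont_comp)

lemma fp_exists: "\<exists>qs. Inv qs \<and> Tm qs = qs"
proof -
  obtain v where v: "v \<in> Sv" and fv: "gmap v = v"
    using brouwer[OF compact_eq_bounded_closed[THEN iffD2, OF conjI[OF Sv_bounded Sv_closed]] Sv_convex Sv_ne Sv_cont Sv_maps]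
    by blast
  have "Inv (unemb v)" using Dm_Inv[OF dl_pos] v by (simp add: Sv_def)
  moreover have "Tm (unemb v) = unemb v" using fv unemb_gmap by metis
  ultimately show ?thesis by blast
qed

end

theorem corollary3:
  fixes \<alpha> :: real
    and pX :: "'x::finite \<Rightarrow> real"
    and W :: "'x \<Rightarrow> 'y::finite \<Rightarrow> real"
    and q :: "nat \<Rightarrow> 'x \<Rightarrow> 'y \<Rightarrow> real"
  assumes "\<alpha> > 1"
    and "is_dist pX"
    and "is_channel W"
    and "is_channel (q 0)"
    and "\<And>x y. q 0 x y > 0"
    and "\<And>k. q (Suc k) = channel_update \<alpha> W (rev_channel pX (q k))"
  shows "(\<lambda>k. F_C \<alpha> pX W (q (Suc k)) (rev_channel pX (q k)))
           \<longlonglongrightarrow> augustin_csiszar_MI \<alpha> pX W"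
proof -
  interpret AC \<alpha> pX W using assms(1-3) by unfold_locales
  have inv: "Inv (q k)" for k
  proof (induction k)
    case 0 show ?case using assms(4,5) unfolding Inv_def is_channel_def is_dist_def
      by (auto simp: less_imp_le)
  next
    case (Suc k) then show ?case using Tm_Inv assms(6) by simp
  qed
  obtain qs where iS: "Inv qs" and fp: "Tm qs = qs" using fp_exists by blast
  define a where "a k = f qs - f (q k)" for k
  have Fk: "F_C \<alpha> pX W (q (Suc k)) (rev_channel pX (q k)) = ereal (f (q k))" for k
    using F_C_eq[OF inv[of k]] assms(6) by simp
  have a_nn: "0 \<le> a k" for k
  proof -
    have "ereal (f (q k)) \<le> ereal (f qs)"
      using upper_ereal[OF inv[of k] fp_value(1)[OF iS fp]] fp_value(2)[OF iS fp] by simp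
    then show ?thesis unfolding a_def by simp
  qed
  have tel: "(\<Sum>k<n. (1 - 1/\<alpha>) * a k) \<le> Phi qs (q n) - Phi qs (q 0)" for n
  proof (induction n)
    case 0 show ?case by simp
  next
    case (Suc n)
    have "(1 - 1/\<alpha>) * a n \<le> Phi qs (q (Suc n)) - Phi qs (q n)"
      using tele[OF inv[of n] iS fp] assms(6) unfolding a_def by simp
    then show ?case using Suc by simp
  qed
  have "summable (\<lambda>k. (1 - 1/\<alpha>) * a k)"
  proof (rule summableI_nonneg_bounded)
    show "0 \<le> (1 - 1/\<alpha>) * a k" for k using a_nn[of k] beta_pos by simp
    show "(\<Sum>k<n. (1 - 1/\<alpha>) * a k) \<le> Phi qs qs - Phi qs (q 0)" for n
      using tel[of n] Phi_le[OF inv[of n] iS fp] by linarith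
  qed
  then have "(\<lambda>k. (1 - 1/\<alpha>) * a k) \<longlonglongrightarrow> 0" by (rule summable_LIMSEQ_zero)
  then have "(\<lambda>k. (1/(1 - 1/\<alpha>)) * ((1 - 1/\<alpha>) * a k)) \<longlonglongrightarrow> (1/(1 - 1/\<alpha>)) * 0"
    by (intro tendsto_mult tendsto_const)
  then have "a \<longlonglongrightarrow> 0" using beta_pos by simp
  then have "(\<lambda>k. f qs - a k) \<longlonglongrightarrow> f qs - 0" by (intro tendsto_diff tendsto_const)
  then have lf: "(\<lambda>k. f (q k)) \<longlonglongrightarrow> f qs" unfolding a_def by simp
  then have lfe: "(\<lambda>k. ereal (f (q k))) \<longlonglongrightarrow> ereal (f qs)" by (rule tendsto_ereal)
  have "augustin_csiszar_MI \<alpha> pX W = ereal (f qs)"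
  proof (rule antisym)
    show "augustin_csiszar_MI \<alpha> pX W \<le> ereal (f qs)"
      unfolding augustin_csiszar_MI_def
      by (rule INF_lower2[of "Qm qs"]) (use fp_value[OF iS fp] in auto)
    show "ereal (f qs) \<le> augustin_csiszar_MI \<alpha> pX W"
      unfolding augustin_csiszar_MI_def
    proof (rule INF_greatest)
      fix Q :: "'y \<Rightarrow> real" assume "Q \<in> {qY. is_dist qY}"
      then have Q: "is_dist Q" by simp
      show "ereal (f qs) \<le> (\<Sum>x\<in>UNIV. ereal (pX x) * renyi_div \<alpha> (W x) Q)"
        by (rule tendsto_le[OF trivial_limit_sequentially tendsto_const lfe])
           (use upper_ereal[OF inv Q] in auto)
    qed
  qed
  then show ?thesis unfolding Fk using lfe by simp
qed

end
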